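(* For every $\gamma\in\mathbb R$ there exists a solution $(X,Y,Z,W)$ of system (S), defined on an interval containing $(-\infty,0]$, such that: (1) $Y(t)>0$ for all $t$; (2) $e^{-2t}|(X,Z,W)(t)-(0,1,0)|$ is bounded as $t\to-\infty$; (3) $e^{-t}|Y(t)|$ is bounded as $t\to-\infty$; (4) $\lim_{t\to-\infty}W/Y^2=1$; (5) $\lim_{t\to-\infty}(1-Z)/Y^2=\gamma$.
   Context: Fix a positive integer $d$ and $q\in\mathbb R$. Put $A_2=d(d+2)$ and $A_3=\tfrac14d(d+2)^2q^2$. System (S) is $$X'=X(dX^2+Z^2-1)+\tfrac{A_2}{d}Y^2-2\tfrac{A_3}{d}W^2,\qquad Y'=Y(dX^2+Z^2-X),$$ $$Z'=Z(dX^2+Z^2-1)+A_3W^2,\qquad W'=W(dX^2+Z^2-2X+Z).$$ *)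

theory Defs
  imports "HOL-Analysis.Analysis"
begin

definition A2 :: "nat \<Rightarrow> real" where
  "A2 d = real d * (real d + 2)"

definition A3 :: "nat \<Rightarrow> real \<Rightarrow> real" where
  "A3 d q = (1/4) * real d * (real d + 2)^2 * q^2"

definition solves_S ::
  "nat \<Rightarrow> real \<Rightarrow> real set \<Rightarrow> (real \<Rightarrow> real) \<Rightarrow> (real \<Rightarrow> real) \<Rightarrow> (real \<Rightarrow> real) \<Rightarrow> (real \<Rightarrow> real) \<Rightarrow> bool" where
  "solves_S d q I X Y Z W \<longleftrightarrow>
     (\<forall>t\<in>I.
       (X has_real_derivative
          (X t * (real d * (X t)^2 + (Z t)^2 - 1) + A2 d / real d * (Y t)^2
           - 2 * A3 d q / real d * (W t)^2)) (at t within I) \<and>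
       (Y has_real_derivative
          (Y t * (real d * (X t)^2 + (Z t)^2 - X t))) (at t within I) \<and>
       (Z has_real_derivative
          (Z t * (real d * (X t)^2 + (Z t)^2 - 1) + A3 d q * (W t)^2)) (at t within I) \<and>
       (W has_real_derivative
          (W t * (real d * (X t)^2 + (Z t)^2 - 2 * X t + Z t))) (at t within I))"

end

theory Submission
  imports Defs "HOL-Analysis.Analysis"
begin

type_synonym st = "real \<times> real \<times> real \<times> real \<times> real"

definition Dom :: "real \<Rightarrow> st set" where
  "Dom g = {x. 0 \<le> fst x \<and> fst x \<le> 1 \<and> \<bar>fst (snd x)\<bar> \<le> 1/2 \<and> \<bar>fst (snd (snd x)) - 1\<bar> \<le> 1/2
     \<and> \<bar>fst (snd (snd (snd x))) + g\<bar> \<le> 1/2 \<and> \<bar>snd (snd (snd (snd x))) - 1\<bar> \<le> 1/2}"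

definition BL :: "real \<Rightarrow> (st \<Rightarrow> real) \<Rightarrow> bool" where
  "BL g f \<longleftrightarrow> (\<exists>M L. \<forall>x\<in>Dom g. \<forall>y\<in>Dom g. \<bar>f x\<bar> \<le> M \<and> \<bar>f x - f y\<bar> \<le> L * dist x y)"

lemma BL_const: "BL g (\<lambda>x. c)"
  unfolding BL_def by (rule exI[of _ "\<bar>c\<bar>"], rule exI[of _ 0]) auto

lemma BL_proj:
  assumes "\<And>x. x \<in> Dom g \<Longrightarrow> \<bar>f x\<bar> \<le> M" "\<And>x y. \<bar>f x - f y\<bar> \<le> dist x y"
  shows "BL g f"
  unfolding BL_def using assms by (intro exI[of _ M] exI[of _ 1]) auto

lemma dist_proj:
  fixes x y :: st
  shows "\<bar>fst x - fst y\<bar> \<le> dist x y"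
    "\<bar>fst (snd x) - fst (snd y)\<bar> \<le> dist x y"
    "\<bar>fst (snd (snd x)) - fst (snd (snd y))\<bar> \<le> dist x y"
    "\<bar>fst (snd (snd (snd x))) - fst (snd (snd (snd y)))\<bar> \<le> dist x y"
    "\<bar>snd (snd (snd (snd x))) - snd (snd (snd (snd y)))\<bar> \<le> dist x y"
proof -
  have a: "dist (snd x) (snd y) \<le> dist x y" by (rule dist_snd_le)
  have b: "dist (snd (snd x)) (snd (snd y)) \<le> dist (snd x) (snd y)" by (rule dist_snd_le)
  have c: "dist (snd (snd (snd x))) (snd (snd (snd y))) \<le> dist (snd (snd x)) (snd (snd y))" by (rule dist_snd_le)
  have e: "dist (snd (snd (snd (snd x)))) (snd (snd (snd (snd y)))) \<le> dist (snd (snd (snd x))) (snd (snd (snd y)))" by (rule dist_snd_le)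
  show "\<bar>fst x - fst y\<bar> \<le> dist x y" using dist_fst_le[of x y] by (simp add: dist_real_def)
  show "\<bar>fst (snd x) - fst (snd y)\<bar> \<le> dist x y" using dist_fst_le[of "snd x" "snd y"] a by (simp add: dist_real_def)
  show "\<bar>fst (snd (snd x)) - fst (snd (snd y))\<bar> \<le> dist x y" using dist_fst_le[of "snd (snd x)" "snd (snd y)"] a b by (simp add: dist_real_def)
  show "\<bar>fst (snd (snd (snd x))) - fst (snd (snd (snd y)))\<bar> \<le> dist x y" using dist_fst_le[of "snd (snd (snd x))" "snd (snd (snd y))"] a b c by (simp add: dist_real_def)
  show "\<bar>snd (snd (snd (snd x))) - snd (snd (snd (snd y)))\<bar> \<le> dist x y" using a b c e by (simp add: dist_real_def)
qed

lemma BL_u: "BL g (\<lambda>x. fst x)"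
proof (rule BL_proj[of _ _ "1"])
  fix x assume "x \<in> Dom g" then show "\<bar>fst x\<bar> \<le> 1" unfolding Dom_def by (simp add: abs_if split: if_splits; linarith)
next
  fix x y :: st show "\<bar>fst x - fst y\<bar> \<le> dist x y" by (rule dist_proj)
qed

lemma BL_p: "BL g (\<lambda>x. fst (snd x))"
proof (rule BL_proj[of _ _ "1"])
  fix x assume "x \<in> Dom g" then show "\<bar>fst (snd x)\<bar> \<le> 1" unfolding Dom_def by (simp add: abs_if split: if_splits; linarith)
next
  fix x y :: st show "\<bar>fst (snd x) - fst (snd y)\<bar> \<le> dist x y" by (rule dist_proj)
qed

lemma BL_e: "BL g (\<lambda>x. fst (snd (snd x)))"
proof (rule BL_proj[of _ _ "2"])
  fix x assume "x \<in> Dom g" then show "\<bar>fst (snd (snd x))\<bar> \<le> 2" unfolding Dom_def by (simp add: abs_if split: if_splits; linarith)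
next
  fix x y :: st show "\<bar>fst (snd (snd x)) - fst (snd (snd y))\<bar> \<le> dist x y" by (rule dist_proj)
qed

lemma BL_z: "BL g (\<lambda>x. fst (snd (snd (snd x))))"
proof (rule BL_proj[of _ _ "\<bar>g\<bar> + 1"])
  fix x assume "x \<in> Dom g" then show "\<bar>fst (snd (snd (snd x)))\<bar> \<le> \<bar>g\<bar> + 1" unfolding Dom_def by (simp add: abs_if split: if_splits; linarith)
next
  fix x y :: st show "\<bar>fst (snd (snd (snd x))) - fst (snd (snd (snd y)))\<bar> \<le> dist x y" by (rule dist_proj)
qed

lemma BL_w: "BL g (\<lambda>x. snd (snd (snd (snd x))))"
proof (rule BL_proj[of _ _ "2"])
  fix x assume "x \<in> Dom g" then show "\<bar>snd (snd (snd (snd x)))\<bar> \<le> 2" unfolding Dom_def by (simp add: abs_if split: if_splits; linarith)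
next
  fix x y :: st show "\<bar>snd (snd (snd (snd x))) - snd (snd (snd (snd y)))\<bar> \<le> dist x y" by (rule dist_proj)
qed

lemma BL_add: assumes "BL g f" "BL g h" shows "BL g (\<lambda>x. f x + h x)"
proof -
  obtain M1 L1 where 1: "\<forall>x\<in>Dom g. \<forall>y\<in>Dom g. \<bar>f x\<bar> \<le> M1 \<and> \<bar>f x - f y\<bar> \<le> L1 * dist x y"
    using assms(1) unfolding BL_def by blast
  obtain M2 L2 where 2: "\<forall>x\<in>Dom g. \<forall>y\<in>Dom g. \<bar>h x\<bar> \<le> M2 \<and> \<bar>h x - h y\<bar> \<le> L2 * dist x y"
    using assms(2) unfolding BL_def by blast
  have "\<forall>x\<in>Dom g. \<forall>y\<in>Dom g. \<bar>f x + h x\<bar> \<le> M1 + M2 \<and> \<bar>f x + h x - (f y + h y)\<bar> \<le> (L1 + L2) * dist x y"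
  proof (intro ballI)
    fix x y assume x: "x \<in> Dom g" and y: "y \<in> Dom g"
    show "\<bar>f x + h x\<bar> \<le> M1 + M2 \<and> \<bar>f x + h x - (f y + h y)\<bar> \<le> (L1 + L2) * dist x y" using 1 2 x y
      by (smt (verit) distrib_right)
  qed
  then show ?thesis unfolding BL_def by blast
qed

lemma BL_neg: assumes "BL g f" shows "BL g (\<lambda>x. - f x)"
  using assms unfolding BL_def by (smt (verit))

lemma BL_diff: assumes "BL g f" "BL g h" shows "BL g (\<lambda>x. f x - h x)"
  using BL_add[OF assms(1) BL_neg[OF assms(2)]] by simp

lemma BL_mult: assumes "BL g f" "BL g h" shows "BL g (\<lambda>x. f x * h x)"
proof -
  obtain M1 L1 where 1: "\<forall>x\<in>Dom g. \<forall>y\<in>Dom g. \<bar>f x\<bar> \<le> M1 \<and> \<bar>f x - f y\<bar> \<le> L1 * dist x y"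
    using assms(1) unfolding BL_def by blast
  obtain M2 L2 where 2: "\<forall>x\<in>Dom g. \<forall>y\<in>Dom g. \<bar>h x\<bar> \<le> M2 \<and> \<bar>h x - h y\<bar> \<le> L2 * dist x y"
    using assms(2) unfolding BL_def by blast
  have "\<forall>x\<in>Dom g. \<forall>y\<in>Dom g. \<bar>f x * h x\<bar> \<le> M1 * M2 \<and> \<bar>f x * h x - f y * h y\<bar> \<le> (M1 * L2 + M2 * L1) * dist x y"
  proof (intro ballI)
    fix x y assume x: "x \<in> Dom g" and y: "y \<in> Dom g"
    have a: "\<bar>f x\<bar> \<le> M1" "\<bar>h x\<bar> \<le> M2" "\<bar>h y\<bar> \<le> M2" using 1 2 x y by auto
    have m: "0 \<le> M1" "0 \<le> M2" using a by linarith+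
    have s1: "\<bar>f x * h x\<bar> \<le> M1 * M2" using a by (simp add: abs_mult mult_mono')
    have "f x * h x - f y * h y = f x * (h x - h y) + h y * (f x - f y)" by (simp add: algebra_simps)
    also have "\<bar>\<dots>\<bar> \<le> \<bar>f x\<bar> * \<bar>h x - h y\<bar> + \<bar>h y\<bar> * \<bar>f x - f y\<bar>" by (metis abs_mult abs_triangle_ineq)
    also have "\<dots> \<le> M1 * (L2 * dist x y) + M2 * (L1 * dist x y)"
      using 1 2 x y a m by (intro add_mono mult_mono) auto
    finally show "\<bar>f x * h x\<bar> \<le> M1 * M2 \<and> \<bar>f x * h x - f y * h y\<bar> \<le> (M1 * L2 + M2 * L1) * dist x y"
      using s1 by (simp add: algebra_simps)
  qed
  then show ?thesis unfolding BL_def by blast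
qed

lemma BL_pow2: assumes "BL g f" shows "BL g (\<lambda>x. (f x)^2)"
  using BL_mult[OF assms assms] by (simp add: power2_eq_square)

lemmas BL_intros = BL_const BL_u BL_p BL_e BL_z BL_w BL_add BL_diff BL_mult BL_pow2 BL_neg

definition clamp :: "real \<Rightarrow> real \<Rightarrow> real" where "clamp \<delta> u = max 0 (min \<delta> u)"

lemma clamp_in: "0 \<le> \<delta> \<Longrightarrow> clamp \<delta> u \<in> {0..\<delta>}" by (auto simp: clamp_def)
lemma clamp_id: "u \<in> {0..\<delta>} \<Longrightarrow> clamp \<delta> u = u" by (auto simp: clamp_def)
lemma clamp_cont: "continuous_on UNIV (clamp \<delta>)" unfolding clamp_def by (intro continuous_intros)

lemma int_bound:
  fixes h :: "real \<Rightarrow> real"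
  assumes "0 \<le> u" "u \<le> \<delta>" "continuous_on {0..\<delta>} h" "\<And>s. s \<in> {0..\<delta>} \<Longrightarrow> \<bar>h s\<bar> \<le> B"
  shows "\<bar>integral {0..u} (\<lambda>s. s^k * h s)\<bar> \<le> u^k * B * u"
proof -
  have c: "continuous_on {0..u} (\<lambda>s. s^k * h s)"
    using assms by (intro continuous_intros) (auto intro: continuous_on_subset)
  have "norm (integral {0..u} (\<lambda>s. s^k * h s)) \<le> (u^k * B) * (u - 0)"
  proof (rule integral_bound[OF assms(1) c])
    fix t assume t: "t \<in> {0..u}"
    have "\<bar>t^k\<bar> \<le> u^k" using t by (auto intro: power_mono)
    moreover have "\<bar>h t\<bar> \<le> B" using t assms by auto
    ultimately show "norm (t^k * h t) \<le> u^k * B"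
      by (simp add: abs_mult mult_mono')
  qed
  then show ?thesis by simp
qed

lemma int_cont:
  fixes h :: "real \<Rightarrow> real"
  assumes "0 \<le> \<delta>" "continuous_on {0..\<delta>} h"
  shows "continuous_on {0..\<delta>} (\<lambda>u. integral {0..u} (\<lambda>s. s^k * h s))"
  using assms by (intro indefinite_integral_continuous_1 integrable_continuous_interval continuous_intros)

lemma opR_cont:
  fixes h :: "real \<Rightarrow> real"
  assumes "0 \<le> \<delta>" "continuous_on {0..\<delta>} h"
  shows "continuous_on UNIV (\<lambda>u. c + integral {0..clamp \<delta> u} (\<lambda>s. s^k * h s))"
proof -
  have "continuous_on UNIV ((\<lambda>u. integral {0..u} (\<lambda>s. s^k * h s)) \<circ> clamp \<delta>)"
  proof (rule continuous_on_compose[OF clamp_cont])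
    have "range (clamp \<delta>) \<subseteq> {0..\<delta>}" using clamp_in[OF assms(1)] by auto
    then show "continuous_on (range (clamp \<delta>)) (\<lambda>u. integral {0..u} (\<lambda>s. s^k * h s))"
      using int_cont[OF assms] by (rule continuous_on_subset[rotated])
  qed
  then show ?thesis by (intro continuous_intros) (simp add: o_def)
qed

lemma opS_cont:
  fixes h :: "real \<Rightarrow> real"
  assumes "0 \<le> \<delta>" "continuous_on {0..\<delta>} h" "\<And>s. s \<in> {0..\<delta>} \<Longrightarrow> \<bar>h s\<bar> \<le> B"
  shows "continuous_on UNIV (\<lambda>u. inverse ((clamp \<delta> u)^2) * integral {0..clamp \<delta> u} (\<lambda>s. s^3 * h s))"
proof -
  define H where "H = (\<lambda>u. inverse (u^2) * integral {0..u} (\<lambda>s. s^3 * h s))"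
  have bnd: "\<bar>H u\<bar> \<le> u^2 * B" if "u \<in> {0..\<delta>}" for u
  proof (cases "u = 0")
    case True then show ?thesis by (simp add: H_def)
  next
    case False
    have "\<bar>integral {0..u} (\<lambda>s. s^3 * h s)\<bar> \<le> u^3 * B * u"
      using int_bound[of u \<delta> h B 3] that assms by auto
    then have "inverse (u^2) * \<bar>integral {0..u} (\<lambda>s. s^3 * h s)\<bar> \<le> inverse (u^2) * (u^3 * B * u)"
      by (intro mult_left_mono) auto
    also have "\<dots> = u^2 * B" using False by (simp add: field_simps power2_eq_square power3_eq_cube)
    finally show ?thesis by (simp add: H_def abs_mult)
  qed
  have cH: "continuous_on {0..\<delta>} H"
    unfolding continuous_on_eq_continuous_within
  proof
    fix u assume u: "u \<in> {0..\<delta>}"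
    show "continuous (at u within {0..\<delta>}) H"
    proof (cases "u = 0")
      case False
      have "continuous (at u within {0..\<delta>}) (\<lambda>u. integral {0..u} (\<lambda>s. s^3 * h s))"
        using int_cont[OF assms(1,2), of 3] u by (simp add: continuous_on_eq_continuous_within)
      then show ?thesis unfolding H_def using False
        by (intro continuous_intros) auto
    next
      case True
      have "((\<lambda>v. H v) \<longlongrightarrow> 0) (at 0 within {0..\<delta>})"
      proof (rule Lim_null_comparison)
        show "\<forall>\<^sub>F v in at 0 within {0..\<delta>}. norm (H v) \<le> v^2 * B"
          using bnd by (auto simp: eventually_at_filter)
        show "((\<lambda>v. v^2 * B) \<longlongrightarrow> 0) (at 0 within {0..\<delta>})"
          by (rule tendsto_eq_intros refl | simp)+
      qed
      moreover have "H 0 = 0" by (simp add: H_def)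
      ultimately show ?thesis using True by (simp add: continuous_within)
    qed
  qed
  have "continuous_on UNIV (H \<circ> clamp \<delta>)"
    using cH clamp_cont clamp_in[OF assms(1)]
    by (intro continuous_on_compose) (auto intro: continuous_on_subset)
  then show ?thesis by (simp add: o_def H_def)
qed

type_synonym bc = "real \<Rightarrow>\<^sub>C real"
type_synonym bc4 = "bc \<times> bc \<times> bc \<times> bc"

definition vals :: "bc4 \<Rightarrow> real \<Rightarrow> st" where
  "vals f s = (s, apply_bcontfun (fst f) s, apply_bcontfun (fst (snd f)) s,
      apply_bcontfun (fst (snd (snd f))) s, apply_bcontfun (snd (snd (snd f))) s)"

definition Bl :: "real \<Rightarrow> bc4 set" where
  "Bl g = {f. \<forall>s. \<bar>apply_bcontfun (fst f) s\<bar> \<le> 1/2 \<and> \<bar>apply_bcontfun (fst (snd f)) s - 1\<bar> \<le> 1/2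
     \<and> \<bar>apply_bcontfun (fst (snd (snd f))) s + g\<bar> \<le> 1/2 \<and> \<bar>apply_bcontfun (snd (snd (snd f))) s - 1\<bar> \<le> 1/2}"

lemma vals_Dom: "f \<in> Bl g \<Longrightarrow> s \<in> {0..1} \<Longrightarrow> vals f s \<in> Dom g"
  by (auto simp: Bl_def Dom_def vals_def)

lemma dist_Pair_mono:
  fixes a c :: "'a::metric_space" and a' c' :: "'c::metric_space" and b d :: "'b::metric_space" and b' d' :: "'d::metric_space"
  assumes "dist a c \<le> dist a' c'" "dist b d \<le> dist b' d'"
  shows "dist (a,b) (c,d) \<le> dist (a',b') (c',d')"
  unfolding dist_Pair_Pair using assms
  by (intro real_sqrt_le_mono add_mono power_mono) auto

lemma vals_dist: "dist (vals f s) (vals f' s) \<le> dist f f'"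
proof -
  obtain f1 f2 f3 f4 where f: "f = (f1,f2,f3,f4)" by (cases f) auto
  obtain g1 g2 g3 g4 where g: "f' = (g1,g2,g3,g4)" by (cases f') auto
  have "dist (vals f s) (vals f' s) = dist (f1 s, f2 s, f3 s, f4 s) (g1 s, g2 s, g3 s, g4 s)"
    by (simp add: vals_def f g dist_Pair_Pair)
  also have "\<dots> \<le> dist f f'" unfolding f g
    by (intro dist_Pair_mono dist_bounded)
  finally show ?thesis .
qed

lemma vals_cont: "continuous_on UNIV (vals f)"
  unfolding vals_def by (intro continuous_intros) auto

lemma BL_get:
  assumes "BL g F"
  shows "\<exists>M L. 0 \<le> M \<and> 0 \<le> L \<and> (\<forall>x\<in>Dom g. \<forall>y\<in>Dom g. \<bar>F x\<bar> \<le> M \<and> \<bar>F x - F y\<bar> \<le> L * dist x y)"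
proof -
  obtain M L where HML: "\<forall>x\<in>Dom g. \<forall>y\<in>Dom g. \<bar>F x\<bar> \<le> M \<and> \<bar>F x - F y\<bar> \<le> L * dist x y"
    using assms unfolding BL_def by blast
  have "\<forall>x\<in>Dom g. \<forall>y\<in>Dom g. \<bar>F x\<bar> \<le> \<bar>M\<bar> \<and> \<bar>F x - F y\<bar> \<le> \<bar>L\<bar> * dist x y"
  proof (intro ballI)
    fix x y assume "x \<in> Dom g" "y \<in> Dom g"
    then have "\<bar>F x\<bar> \<le> M" "\<bar>F x - F y\<bar> \<le> L * dist x y" using HML by auto
    moreover have "L * dist x y \<le> \<bar>L\<bar> * dist x y" by (intro mult_right_mono) auto
    ultimately show "\<bar>F x\<bar> \<le> \<bar>M\<bar> \<and> \<bar>F x - F y\<bar> \<le> \<bar>L\<bar> * dist x y" by linarith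
  qed
  then show ?thesis by (intro exI[of _ "\<bar>M\<bar>"] exI[of _ "\<bar>L\<bar>"]) auto
qed

lemma F_cont:
  assumes "\<forall>x\<in>Dom g. \<forall>y\<in>Dom g. \<bar>F x - F y\<bar> \<le> L * dist x y" "0 \<le> L"
    "f \<in> Bl g" "0 \<le> \<delta>" "\<delta> \<le> 1"
  shows "continuous_on {0..\<delta>} (\<lambda>s. F (vals f s))"
proof -
  have "L-lipschitz_on (Dom g) F" unfolding lipschitz_on_def using assms(1,2) by (simp add: dist_real_def)
  then have cF: "continuous_on (Dom g) F" by (rule lipschitz_on_continuous_on)
  have "continuous_on {0..\<delta>} (F \<circ> vals f)"
  proof (rule continuous_on_compose)
    show "continuous_on {0..\<delta>} (vals f)" using vals_cont continuous_on_subset by blast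
    have "vals f ` {0..\<delta>} \<subseteq> Dom g" using vals_Dom[OF assms(3)] assms(5) by auto
    then show "continuous_on (vals f ` {0..\<delta>}) F" using cF continuous_on_subset by blast
  qed
  then show ?thesis by (simp add: o_def)
qed

definition opR :: "real \<Rightarrow> (st \<Rightarrow> real) \<Rightarrow> real \<Rightarrow> bc4 \<Rightarrow> real \<Rightarrow> real" where
  "opR c F \<delta> f u = c + integral {0..clamp \<delta> u} (\<lambda>s. s^1 * F (vals f s))"
definition opS :: "(st \<Rightarrow> real) \<Rightarrow> real \<Rightarrow> bc4 \<Rightarrow> real \<Rightarrow> real" where
  "opS F \<delta> f u = inverse ((clamp \<delta> u)^2) * integral {0..clamp \<delta> u} (\<lambda>s. s^3 * F (vals f s))"

definition Tm :: "(st \<Rightarrow> real) \<Rightarrow> (st \<Rightarrow> real) \<Rightarrow> (st \<Rightarrow> real) \<Rightarrow> (st \<Rightarrow> real) \<Rightarrow> real \<Rightarrow> real \<Rightarrow> bc4 \<Rightarrow> bc4" where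
  "Tm F1 F2 F3 F4 g \<delta> f = (Bcontfun (opS F1 \<delta> f), Bcontfun (opR 1 F2 \<delta> f),
      Bcontfun (opR (-g) F3 \<delta> f), Bcontfun (opR 1 F4 \<delta> f))"

context
  fixes g \<delta> M L :: real and F :: "st \<Rightarrow> real"
  assumes HML: "\<forall>x\<in>Dom g. \<forall>y\<in>Dom g. \<bar>F x\<bar> \<le> M \<and> \<bar>F x - F y\<bar> \<le> L * dist x y"
    and L0: "0 \<le> L" and d0: "0 < \<delta>" and d1: "\<delta> \<le> 1"
begin

lemma Fb: "f \<in> Bl g \<Longrightarrow> s \<in> {0..\<delta>} \<Longrightarrow> \<bar>F (vals f s)\<bar> \<le> M"
  using HML vals_Dom[of f g s] d1 by auto

lemma Fl: "f \<in> Bl g \<Longrightarrow> f' \<in> Bl g \<Longrightarrow> s \<in> {0..\<delta>} \<Longrightarrow>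
   \<bar>F (vals f s) - F (vals f' s)\<bar> \<le> L * dist f f'"
proof -
  assume a: "f \<in> Bl g" "f' \<in> Bl g" "s \<in> {0..\<delta>}"
  then have "\<bar>F (vals f s) - F (vals f' s)\<bar> \<le> L * dist (vals f s) (vals f' s)"
    using HML vals_Dom[of _ g s] d1 by auto
  also have "\<dots> \<le> L * dist f f'" using L0 vals_dist by (intro mult_left_mono) auto
  finally show ?thesis .
qed

lemma Fc: "f \<in> Bl g \<Longrightarrow> continuous_on {0..\<delta>} (\<lambda>s. F (vals f s))"
  using F_cont[of g F L f \<delta>] HML L0 d0 d1 by auto

lemma opR_bc: "f \<in> Bl g \<Longrightarrow> opR c F \<delta> f \<in> bcontfun"
proof -
  assume f: "f \<in> Bl g"
  show ?thesis
  proof (rule bcontfun_normI)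
    show "continuous_on UNIV (opR c F \<delta> f)" unfolding opR_def
      using opR_cont[OF _ Fc[OF f], of c 1] d0 by simp
    fix u
    have cu: "clamp \<delta> u \<in> {0..\<delta>}" using clamp_in d0 by simp
    have "\<bar>integral {0..clamp \<delta> u} (\<lambda>s. s^1 * F (vals f s))\<bar> \<le> (clamp \<delta> u)^1 * M * clamp \<delta> u"
      using cu by (intro int_bound[of _ \<delta>] Fc f Fb) auto
    then show "norm (opR c F \<delta> f u) \<le> \<bar>c\<bar> + \<delta> * M * \<delta>"
      using cu Fb[OF f, of 0] d0
      by (simp add: opR_def) (smt (verit) mult_mono mult_nonneg_nonneg)
  qed
qed


lemma int_diff_eq:
  assumes "f \<in> Bl g" "f' \<in> Bl g" "v \<in> {0..\<delta>}"
  shows "integral {0..v} (\<lambda>s. s^k * F (vals f s)) - integral {0..v} (\<lambda>s. s^k * F (vals f' s))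
     = integral {0..v} (\<lambda>s. s^k * (F (vals f s) - F (vals f' s)))"
proof -
  have "continuous_on {0..v} (\<lambda>s. F (vals f s))" "continuous_on {0..v} (\<lambda>s. F (vals f' s))"
    using Fc[OF assms(1)] Fc[OF assms(2)] assms(3) by (auto intro: continuous_on_subset)
  then have "(\<lambda>s. s^k * F (vals f s)) integrable_on {0..v}" "(\<lambda>s. s^k * F (vals f' s)) integrable_on {0..v}"
    by (auto intro!: integrable_continuous_interval continuous_intros)
  then show ?thesis by (simp add: integral_diff[symmetric] algebra_simps)
qed

lemma int_diff_bound:
  assumes "f \<in> Bl g" "f' \<in> Bl g" "v \<in> {0..\<delta>}"
  shows "\<bar>integral {0..v} (\<lambda>s. s^k * F (vals f s)) - integral {0..v} (\<lambda>s. s^k * F (vals f' s))\<bar>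
     \<le> v^k * (L * dist f f') * v"
  unfolding int_diff_eq[OF assms]
  using assms by (intro int_bound[of _ \<delta>] continuous_intros Fc Fl) auto

lemma int_bound2:
  assumes "f \<in> Bl g" "v \<in> {0..\<delta>}"
  shows "\<bar>integral {0..v} (\<lambda>s. s^k * F (vals f s))\<bar> \<le> v^k * M * v"
  using assms by (intro int_bound[of _ \<delta>] Fc Fb) auto

lemma opR_close: "f \<in> Bl g \<Longrightarrow> \<bar>opR c F \<delta> f u - c\<bar> \<le> \<delta>^2 * M"
proof -
  assume f: "f \<in> Bl g"
  define v where "v = clamp \<delta> u"
  have v: "v \<in> {0..\<delta>}" using clamp_in d0 v_def by simp
  have M0: "0 \<le> M" using Fb[OF f, of 0] d0 by auto
  have "\<bar>opR c F \<delta> f u - c\<bar> \<le> v^1 * M * v" unfolding opR_def v_def[symmetric]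
    using int_bound2[OF f v, of 1] by simp
  also have "\<dots> = v^2 * M" by (simp add: power2_eq_square)
  also have "\<dots> \<le> \<delta>^2 * M" using v M0 by (intro mult_right_mono power_mono) auto
  finally show ?thesis .
qed

lemma opR_lip: "f \<in> Bl g \<Longrightarrow> f' \<in> Bl g \<Longrightarrow> \<bar>opR c F \<delta> f u - opR c F \<delta> f' u\<bar> \<le> \<delta>^2 * (L * dist f f')"
proof -
  assume f: "f \<in> Bl g" and f': "f' \<in> Bl g"
  define v where "v = clamp \<delta> u"
  have v: "v \<in> {0..\<delta>}" using clamp_in d0 v_def by simp
  have M0: "0 \<le> L * dist f f'" using L0 by simp
  have "\<bar>opR c F \<delta> f u - opR c F \<delta> f' u\<bar> \<le> v^1 * (L * dist f f') * v" unfolding opR_def v_def[symmetric]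
    using int_diff_bound[OF f f' v, of 1] by simp
  also have "\<dots> = v^2 * (L * dist f f')" by (simp add: power2_eq_square)
  also have "\<dots> \<le> \<delta>^2 * (L * dist f f')" using v M0 by (intro mult_right_mono power_mono) auto
  finally show ?thesis .
qed

lemma opS_close: "f \<in> Bl g \<Longrightarrow> \<bar>opS F \<delta> f u\<bar> \<le> \<delta>^2 * M"
proof -
  assume f: "f \<in> Bl g"
  define v where "v = clamp \<delta> u"
  have v: "v \<in> {0..\<delta>}" using clamp_in d0 v_def by simp
  have M0: "0 \<le> M" using Fb[OF f, of 0] d0 by auto
  have "\<bar>opS F \<delta> f u\<bar> \<le> v^2 * M"
  proof (cases "v = 0")
    case True then show ?thesis by (simp add: opS_def v_def[symmetric])
  next
    case False
    have "\<bar>opS F \<delta> f u\<bar> = inverse (v^2) * \<bar>integral {0..v} (\<lambda>s. s^3 * F (vals f s))\<bar>"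
      by (simp add: opS_def v_def[symmetric] abs_mult)
    also have "\<dots> \<le> inverse (v^2) * (v^3 * M * v)" using int_bound2[OF f v, of 3] by (intro mult_left_mono) auto
    also have "\<dots> = v^2 * M" using False by (simp add: field_simps power2_eq_square power3_eq_cube)
    finally show ?thesis .
  qed
  also have "\<dots> \<le> \<delta>^2 * M" using v M0 by (intro mult_right_mono power_mono) auto
  finally show ?thesis .
qed

lemma opS_lip: "f \<in> Bl g \<Longrightarrow> f' \<in> Bl g \<Longrightarrow> \<bar>opS F \<delta> f u - opS F \<delta> f' u\<bar> \<le> \<delta>^2 * (L * dist f f')"
proof -
  assume f: "f \<in> Bl g" and f': "f' \<in> Bl g"
  define v where "v = clamp \<delta> u"
  have v: "v \<in> {0..\<delta>}" using clamp_in d0 v_def by simp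
  have M0: "0 \<le> L * dist f f'" using L0 by simp
  have "\<bar>opS F \<delta> f u - opS F \<delta> f' u\<bar> \<le> v^2 * (L * dist f f')"
  proof (cases "v = 0")
    case True then show ?thesis by (simp add: opS_def v_def[symmetric])
  next
    case False
    have "\<bar>opS F \<delta> f u - opS F \<delta> f' u\<bar> = inverse (v^2) * \<bar>integral {0..v} (\<lambda>s. s^3 * F (vals f s)) - integral {0..v} (\<lambda>s. s^3 * F (vals f' s))\<bar>"
      by (simp add: opS_def v_def[symmetric] abs_mult right_diff_distrib[symmetric])
    also have "\<dots> \<le> inverse (v^2) * (v^3 * (L * dist f f') * v)" using int_diff_bound[OF f f' v, of 3] by (intro mult_left_mono) auto
    also have "\<dots> = v^2 * (L * dist f f')" using False by (simp add: field_simps power2_eq_square power3_eq_cube)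
    finally show ?thesis .
  qed
  also have "\<dots> \<le> \<delta>^2 * (L * dist f f')" using v M0 by (intro mult_right_mono power_mono) auto
  finally show ?thesis .
qed

lemma opS_bc: "f \<in> Bl g \<Longrightarrow> opS F \<delta> f \<in> bcontfun"
proof -
  assume f: "f \<in> Bl g"
  show ?thesis
  proof (rule bcontfun_normI)
    show "continuous_on UNIV (opS F \<delta> f)" unfolding opS_def
      using opS_cont[OF _ Fc[OF f], of M] Fb[OF f] d0 by (simp add: o_def)
    fix u show "norm (opS F \<delta> f u) \<le> \<delta>^2 * M" using opS_close[OF f] by simp
  qed
qed

end

lemma cont_proj:
  assumes "\<And>f f'::bc4. dist (\<pi> f) (\<pi> f') \<le> dist f f'"
  shows "continuous_on UNIV (\<lambda>f::bc4. apply_bcontfun (\<pi> f) s)"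
proof -
  have "1-lipschitz_on UNIV (\<lambda>f::bc4. apply_bcontfun (\<pi> f) s)"
    unfolding lipschitz_on_def
  proof (intro conjI ballI)
    fix x y :: bc4
    have "dist (apply_bcontfun (\<pi> x) s) (apply_bcontfun (\<pi> y) s) \<le> dist (\<pi> x) (\<pi> y)" by (rule dist_bounded)
    also have "\<dots> \<le> dist x y" by (rule assms)
    finally show "dist (apply_bcontfun (\<pi> x) s) (apply_bcontfun (\<pi> y) s) \<le> 1 * dist x y" by simp
  qed simp
  then show ?thesis by (rule lipschitz_on_continuous_on)
qed

lemma closed_Bl: "closed (Bl g)"
proof -
  have c1: "continuous_on UNIV (\<lambda>f::bc4. apply_bcontfun (fst f) s)" for s
    by (rule cont_proj) (rule dist_fst_le)
  have c2: "continuous_on UNIV (\<lambda>f::bc4. apply_bcontfun (fst (snd f)) s)" for s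
    by (rule cont_proj, rule order_trans[OF dist_fst_le dist_snd_le])
  have c3: "continuous_on UNIV (\<lambda>f::bc4. apply_bcontfun (fst (snd (snd f))) s)" for s
    by (rule cont_proj, rule order_trans[OF dist_fst_le order_trans[OF dist_snd_le dist_snd_le]])
  have c4: "continuous_on UNIV (\<lambda>f::bc4. apply_bcontfun (snd (snd (snd f))) s)" for s
    by (rule cont_proj, rule order_trans[OF dist_snd_le order_trans[OF dist_snd_le dist_snd_le]])
  have ca: "closed {f::bc4. \<bar>h f - c\<bar> \<le> 1/2}" if "continuous_on UNIV h" for h :: "bc4 \<Rightarrow> real" and c
    by (rule closed_Collect_le, rule continuous_on_rabs, rule continuous_on_diff, rule that, rule continuous_on_const, rule continuous_on_const)
  have ca0: "closed {f::bc4. \<bar>h f\<bar> \<le> 1/2}" if "continuous_on UNIV h" for h :: "bc4 \<Rightarrow> real"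
    using ca[OF that, of 0] by simp
  have ca1: "closed {f::bc4. \<bar>h f + c\<bar> \<le> 1/2}" if "continuous_on UNIV h" for h :: "bc4 \<Rightarrow> real" and c
    using ca[OF that, of "-c"] by simp
  show ?thesis unfolding Bl_def
    apply (rule closed_Collect_all)
    apply (rule closed_Collect_conj, rule ca0[OF c1])
    apply (rule closed_Collect_conj, rule ca[OF c2])
    apply (rule closed_Collect_conj, rule ca1[OF c3])
    apply (rule ca[OF c4])
    done
qed

lemma dist4:
  fixes a1 a2 a3 a4 b1 b2 b3 b4 :: bc
  assumes "dist a1 b1 \<le> e" "dist a2 b2 \<le> e" "dist a3 b3 \<le> e" "dist a4 b4 \<le> e"
  shows "dist (a1,a2,a3,a4) (b1,b2,b3,b4) \<le> 2 * e"
proof -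
  have e0: "0 \<le> e" using assms(1) zero_le_dist order_trans by blast
  have "dist (a1,a2,a3,a4) (b1,b2,b3,b4) = sqrt ((dist a1 b1)^2 + (dist a2 b2)^2 + (dist a3 b3)^2 + (dist a4 b4)^2)"
    by (simp add: dist_Pair_Pair add.assoc)
  also have "\<dots> \<le> sqrt (e^2 + e^2 + e^2 + e^2)"
    using assms by (intro real_sqrt_le_mono add_mono power_mono) auto
  also have "\<dots> = sqrt ((2*e)^2)" by (simp add: power2_eq_square)
  also have "\<dots> = 2 * e" using e0 by (simp only: real_sqrt_abs)
  finally show ?thesis .
qed

lemma fixpoint:
  assumes "BL g F1" "BL g F2" "BL g F3" "BL g F4"
  shows "\<exists>\<delta>>0. \<delta> \<le> 1 \<and> (\<exists>f\<in>Bl g. \<forall>u\<in>{0..\<delta>}.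
     apply_bcontfun (fst f) u = inverse (u^2) * integral {0..u} (\<lambda>s. s^3 * F1 (vals f s)) \<and>
     apply_bcontfun (fst (snd f)) u = 1 + integral {0..u} (\<lambda>s. s^1 * F2 (vals f s)) \<and>
     apply_bcontfun (fst (snd (snd f))) u = -g + integral {0..u} (\<lambda>s. s^1 * F3 (vals f s)) \<and>
     apply_bcontfun (snd (snd (snd f))) u = 1 + integral {0..u} (\<lambda>s. s^1 * F4 (vals f s)))"
proof -
  obtain M1 L1 where h1: "0 \<le> M1" "0 \<le> L1" "\<forall>x\<in>Dom g. \<forall>y\<in>Dom g. \<bar>F1 x\<bar> \<le> M1 \<and> \<bar>F1 x - F1 y\<bar> \<le> L1 * dist x y"
    using BL_get[OF assms(1)] by blast
  obtain M2 L2 where h2: "0 \<le> M2" "0 \<le> L2" "\<forall>x\<in>Dom g. \<forall>y\<in>Dom g. \<bar>F2 x\<bar> \<le> M2 \<and> \<bar>F2 x - F2 y\<bar> \<le> L2 * dist x y"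
    using BL_get[OF assms(2)] by blast
  obtain M3 L3 where h3: "0 \<le> M3" "0 \<le> L3" "\<forall>x\<in>Dom g. \<forall>y\<in>Dom g. \<bar>F3 x\<bar> \<le> M3 \<and> \<bar>F3 x - F3 y\<bar> \<le> L3 * dist x y"
    using BL_get[OF assms(3)] by blast
  obtain M4 L4 where h4: "0 \<le> M4" "0 \<le> L4" "\<forall>x\<in>Dom g. \<forall>y\<in>Dom g. \<bar>F4 x\<bar> \<le> M4 \<and> \<bar>F4 x - F4 y\<bar> \<le> L4 * dist x y"
    using BL_get[OF assms(4)] by blast
  define M where "M = M1 + M2 + M3 + M4"
  define L where "L = L1 + L2 + L3 + L4"
  define \<delta> where "\<delta> = 1 / (2 * (M + L + 1))"
  have M0: "0 \<le> M" "0 \<le> L" using h1 h2 h3 h4 by (auto simp: M_def L_def)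
  have d0: "0 < \<delta>" using M0 by (simp add: \<delta>_def)
  have dML: "\<delta> * (M + L + 1) = 1/2" using M0 by (simp add: \<delta>_def)
  have d1: "\<delta> \<le> 1" unfolding \<delta>_def using M0 by (simp add: field_simps)
  have dM: "\<delta> * M \<le> 1/2" unfolding \<delta>_def using M0 by (simp add: field_simps)
  have dL: "\<delta> * L \<le> 1/2" unfolding \<delta>_def using M0 by (simp add: field_simps)
  have dh: "\<delta> \<le> 1/2" unfolding \<delta>_def using M0 by (simp add: field_simps)
  have d2M: "\<delta>^2 * M \<le> 1/2"
  proof -
    have "\<delta>^2 * M = \<delta> * (\<delta> * M)" by (simp add: power2_eq_square)
    also have "\<dots> \<le> \<delta> * (1/2)" using dM d0 by (intro mult_left_mono) auto
    also have "\<dots> \<le> 1/2" using dh by simp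
    finally show ?thesis .
  qed
  have d2L: "\<delta>^2 * L \<le> 1/4"
  proof -
    have "\<delta>^2 * L = \<delta> * (\<delta> * L)" by (simp add: power2_eq_square)
    also have "\<dots> \<le> \<delta> * (1/2)" using dL d0 by (intro mult_left_mono) auto
    also have "\<dots> \<le> 1/4" using dh by simp
    finally show ?thesis .
  qed
  have Mle: "\<delta>^2 * Mi \<le> 1/2" if "Mi \<le> M" for Mi
    using mult_left_mono[OF that, of "\<delta>^2"] d2M by simp
  have Mi: "\<delta>^2 * M1 \<le> 1/2" "\<delta>^2 * M2 \<le> 1/2" "\<delta>^2 * M3 \<le> 1/2" "\<delta>^2 * M4 \<le> 1/2"
    using h1 h2 h3 h4 by (intro Mle; simp add: M_def)+
  have Li: "\<delta>^2 * L1 \<le> \<delta>^2 * L" "\<delta>^2 * L2 \<le> \<delta>^2 * L" "\<delta>^2 * L3 \<le> \<delta>^2 * L" "\<delta>^2 * L4 \<le> \<delta>^2 * L"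
    using h1 h2 h3 h4 unfolding L_def by (intro mult_left_mono; simp)+
  define T where "T = Tm F1 F2 F3 F4 g \<delta>"
  have bc: "opS F1 \<delta> f \<in> bcontfun" "opR 1 F2 \<delta> f \<in> bcontfun" "opR (-g) F3 \<delta> f \<in> bcontfun" "opR 1 F4 \<delta> f \<in> bcontfun"
    if "f \<in> Bl g" for f
    using opS_bc[OF h1(3) h1(2) d0 d1 that] opR_bc[OF h2(3) h2(2) d0 d1 that]
      opR_bc[OF h3(3) h3(2) d0 d1 that] opR_bc[OF h4(3) h4(2) d0 d1 that] by auto
  have Tapp: "apply_bcontfun (fst (T f)) = opS F1 \<delta> f" "apply_bcontfun (fst (snd (T f))) = opR 1 F2 \<delta> f"
     "apply_bcontfun (fst (snd (snd (T f)))) = opR (-g) F3 \<delta> f" "apply_bcontfun (snd (snd (snd (T f)))) = opR 1 F4 \<delta> f"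
    if "f \<in> Bl g" for f
    using bc[OF that] by (auto simp: T_def Tm_def Bcontfun_inverse)
  have maps: "T ` Bl g \<subseteq> Bl g"
  proof
    fix y assume "y \<in> T ` Bl g"
    then obtain f where f: "f \<in> Bl g" and y: "y = T f" by auto
    have "\<bar>opS F1 \<delta> f s\<bar> \<le> 1/2" for s using opS_close[OF h1(3) h1(2) d0 d1 f, of s] Mi(1) by linarith
    moreover have "\<bar>opR 1 F2 \<delta> f s - 1\<bar> \<le> 1/2" for s using opR_close[OF h2(3) h2(2) d0 d1 f, of 1 s] Mi(2) by linarith
    moreover have "\<bar>opR (-g) F3 \<delta> f s + g\<bar> \<le> 1/2" for s using opR_close[OF h3(3) h3(2) d0 d1 f, of "-g" s] Mi(3) by simp
    moreover have "\<bar>opR 1 F4 \<delta> f s - 1\<bar> \<le> 1/2" for s using opR_close[OF h4(3) h4(2) d0 d1 f, of 1 s] Mi(4) by linarith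
    ultimately show "y \<in> Bl g" unfolding y Bl_def using Tapp[OF f] by simp
  qed
  have contr: "dist (T f) (T f') \<le> 1/2 * dist f f'" if f: "f \<in> Bl g" and f': "f' \<in> Bl g" for f f'
  proof -
    define e where "e = \<delta>^2 * (L * dist f f')"
    have e1: "\<delta>^2 * (Li * dist f f') \<le> e" if "\<delta>^2 * Li \<le> \<delta>^2 * L" for Li
      using mult_right_mono[OF that zero_le_dist[of f f']] unfolding e_def by (simp add: mult.assoc)
    have "dist (fst (T f)) (fst (T f')) \<le> e"
    proof (rule dist_bound)
      fix x show "dist (fst (T f) x) (fst (T f') x) \<le> e"
        using opS_lip[OF h1(3) h1(2) d0 d1 f f', of x] e1[OF Li(1)] by (simp add: Tapp f f' dist_real_def)
    qed
    moreover have "dist (fst (snd (T f))) (fst (snd (T f'))) \<le> e"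
    proof (rule dist_bound)
      fix x show "dist (fst (snd (T f)) x) (fst (snd (T f')) x) \<le> e"
        using opR_lip[OF h2(3) h2(2) d0 d1 f f', of 1 x] e1[OF Li(2)] by (simp add: Tapp f f' dist_real_def)
    qed
    moreover have "dist (fst (snd (snd (T f)))) (fst (snd (snd (T f')))) \<le> e"
    proof (rule dist_bound)
      fix x show "dist (fst (snd (snd (T f))) x) (fst (snd (snd (T f'))) x) \<le> e"
        using opR_lip[OF h3(3) h3(2) d0 d1 f f', of "-g" x] e1[OF Li(3)] by (simp add: Tapp f f' dist_real_def)
    qed
    moreover have "dist (snd (snd (snd (T f)))) (snd (snd (snd (T f')))) \<le> e"
    proof (rule dist_bound)
      fix x show "dist (snd (snd (snd (T f))) x) (snd (snd (snd (T f'))) x) \<le> e"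
        using opR_lip[OF h4(3) h4(2) d0 d1 f f', of 1 x] e1[OF Li(4)] by (simp add: Tapp f f' dist_real_def)
    qed
    ultimately have "dist (T f) (T f') \<le> 2 * e"
      using dist4[of "fst (T f)" "fst (T f')" e "fst (snd (T f))" "fst (snd (T f'))" "fst (snd (snd (T f)))" "fst (snd (snd (T f')))" "snd (snd (snd (T f)))" "snd (snd (snd (T f')))"] by simp
    also have "\<dots> = 2 * (\<delta>^2 * L) * dist f f'" unfolding e_def by simp
    also have "\<dots> \<le> 2 * (1/4) * dist f f'" using d2L by (intro mult_right_mono) auto
    also have "\<dots> = 1/2 * dist f f'" by simp
    finally show ?thesis .
  qed
  have ne: "Bl g \<noteq> {}"
  proof -
    have "(const_bcontfun 0, const_bcontfun 1, const_bcontfun (-g), const_bcontfun 1) \<in> Bl g"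
      by (simp add: Bl_def const_bcontfun.rep_eq)
    then show ?thesis by blast
  qed
  have cpl: "complete (Bl g)" using closed_Bl complete_UNIV complete_closed_subset by blast
  obtain f where f: "f \<in> Bl g" "T f = f"
    using Banach_fix[OF cpl ne _ _ maps contr] by auto
  have H: "\<forall>u\<in>{0..\<delta>}.
     apply_bcontfun (fst f) u = inverse (u^2) * integral {0..u} (\<lambda>s. s^3 * F1 (vals f s)) \<and>
     apply_bcontfun (fst (snd f)) u = 1 + integral {0..u} (\<lambda>s. s^1 * F2 (vals f s)) \<and>
     apply_bcontfun (fst (snd (snd f))) u = -g + integral {0..u} (\<lambda>s. s^1 * F3 (vals f s)) \<and>
     apply_bcontfun (snd (snd (snd f))) u = 1 + integral {0..u} (\<lambda>s. s^1 * F4 (vals f s))"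
  proof
    fix u assume u: "u \<in> {0..\<delta>}"
    have cu: "clamp \<delta> u = u" using clamp_id[OF u] .
    show "apply_bcontfun (fst f) u = inverse (u^2) * integral {0..u} (\<lambda>s. s^3 * F1 (vals f s)) \<and>
     apply_bcontfun (fst (snd f)) u = 1 + integral {0..u} (\<lambda>s. s^1 * F2 (vals f s)) \<and>
     apply_bcontfun (fst (snd (snd f))) u = -g + integral {0..u} (\<lambda>s. s^1 * F3 (vals f s)) \<and>
     apply_bcontfun (snd (snd (snd f))) u = 1 + integral {0..u} (\<lambda>s. s^1 * F4 (vals f s))"
      using Tapp[OF f(1)] f(2) cu by (simp add: opS_def opR_def del: power_one_right)
  qed
  show ?thesis
    apply (rule exI[of _ \<delta>])
    apply (rule conjI, rule d0)
    apply (rule conjI, rule d1)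
    apply (rule bexI[of _ f])
     apply (rule H)
    apply (rule f(1))
    done
qed

definition cc :: "nat \<Rightarrow> real" where "cc d = (real d + 2) / 2"
definition xi :: "nat \<Rightarrow> st \<Rightarrow> real" where
  "xi d x = fst (snd x) + cc d * (fst (snd (snd x)))^2"
definition gg :: "nat \<Rightarrow> st \<Rightarrow> real" where
  "gg d x = 2 * fst (snd (snd (snd x))) + (fst x)^2 * (real d * (xi d x)^2 + (fst (snd (snd (snd x))))^2)"
definition Fe :: "nat \<Rightarrow> st \<Rightarrow> real" where
  "Fe d x = fst (snd (snd x)) * (gg d x - xi d x)"
definition Fz :: "nat \<Rightarrow> real \<Rightarrow> st \<Rightarrow> real" where
  "Fz d q x = real d * (xi d x)^2 + (fst (snd (snd (snd x))))^2 + fst (snd (snd (snd x))) * gg d x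
     + A3 d q * (snd (snd (snd (snd x))))^2"
definition Fw :: "nat \<Rightarrow> st \<Rightarrow> real" where
  "Fw d x = snd (snd (snd (snd x))) * (gg d x - 2 * xi d x + fst (snd (snd (snd x))))"
definition Qf :: "nat \<Rightarrow> real \<Rightarrow> st \<Rightarrow> real" where
  "Qf d q x = gg d x * (xi d x - 2 * cc d * (fst (snd (snd x)))^2) + 2 * cc d * xi d x * (fst (snd (snd x)))^2
     - (2 * A3 d q / real d) * (snd (snd (snd (snd x))))^2"

lemma BL_xi: "BL g (\<lambda>x. xi d x)" unfolding xi_def by (intro BL_intros)
lemma BL_gg: "BL g (\<lambda>x. gg d x)" unfolding gg_def by (intro BL_intros BL_xi)
lemma BL_Fe: "BL g (Fe d)" unfolding Fe_def by (intro BL_intros BL_xi BL_gg)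
lemma BL_Fz: "BL g (Fz d q)" unfolding Fz_def by (intro BL_intros BL_xi BL_gg)
lemma BL_Fw: "BL g (Fw d)" unfolding Fw_def by (intro BL_intros BL_xi BL_gg)
lemma BL_Qf: "BL g (Qf d q)" unfolding Qf_def by (intro BL_intros BL_xi BL_gg)

lemma idY:
  fixes d :: nat and q U p e z w :: real
  shows "U * e + U * (U * Fe d (U,p,e,z,w) * U) = (U * e) * (real d * (U^2 * p + cc d * (U * e)^2)^2 + (1 + U^2 * z)^2 - (U^2 * p + cc d * (U * e)^2))"
  unfolding Fe_def gg_def xi_def by simp algebra

lemma idZ:
  fixes d :: nat and q U p e z w :: real
  shows "2 * U * U * z + U^2 * (U * Fz d q (U,p,e,z,w) * U) = (1 + U^2 * z) * (real d * (U^2 * p + cc d * (U * e)^2)^2 + (1 + U^2 * z)^2 - 1) + A3 d q * (U^2 * w)^2"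
  unfolding Fz_def gg_def xi_def by simp algebra

lemma idW:
  fixes d :: nat and q U p e z w :: real
  shows "2 * U * U * w + U^2 * (U * Fw d (U,p,e,z,w) * U) = (U^2 * w) * (real d * (U^2 * p + cc d * (U * e)^2)^2 + (1 + U^2 * z)^2 - 2 * (U^2 * p + cc d * (U * e)^2) + (1 + U^2 * z))"
  unfolding Fw_def gg_def xi_def by simp algebra

lemma idX:
  fixes d :: nat and q U p e z w :: real
  assumes d: "d > 0"
  shows "U^3 * Qf d q (U,p,e,z,w) * U + cc d * (2 * (U * e) * (U * e + U * (U * Fe d (U,p,e,z,w) * U)))
     = (U^2 * p + cc d * (U * e)^2) * (real d * (U^2 * p + cc d * (U * e)^2)^2 + (1 + U^2 * z)^2 - 1) + A2 d / real d * (U * e)^2 - 2 * A3 d q / real d * (U^2 * w)^2"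
proof -
  have a2: "A2 d / real d = 2 * cc d" using d by (simp add: A2_def cc_def)
  define k where "k = 2 * A3 d q / real d"
  show ?thesis unfolding a2 k_def[symmetric] Fe_def Qf_def gg_def xi_def
    by simp algebra
qed

lemma deriv_int:
  fixes h G :: "real \<Rightarrow> real"
  assumes "continuous_on {0..\<delta>} h" "u \<in> {0<..<\<delta>}" "\<And>v. v \<in> {0<..<\<delta>} \<Longrightarrow> G v = c + integral {0..v} h"
  shows "(G has_real_derivative h u) (at u)"
proof -
  have "((\<lambda>x. integral {0..x} h) has_real_derivative h u) (at u within {0..\<delta>})"
    using assms(1,2) by (intro integral_has_real_derivative) auto
  moreover have "at u within {0..\<delta>} = at u"
    using assms(2) by (intro at_within_interior) simp
  ultimately have "((\<lambda>x. integral {0..x} h) has_real_derivative h u) (at u)" by simp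
  then have "((\<lambda>x. c + integral {0..x} h) has_real_derivative 0 + h u) (at u)"
    by (intro DERIV_add) auto
  then have "((\<lambda>x. c + integral {0..x} h) has_real_derivative h u) (at u)" by simp
  then show ?thesis
    by (rule has_field_derivative_transform_within_open[of _ _ _ "{0<..<\<delta>}"]) (use assms in auto)
qed

lemma Fc_get:
  assumes "BL g F" "f \<in> Bl g" "0 \<le> \<delta>" "\<delta> \<le> 1"
  shows "continuous_on {0..\<delta>} (\<lambda>s. F (vals f s))"
proof -
  obtain M L where "0 \<le> M" "0 \<le> L" "\<forall>x\<in>Dom g. \<forall>y\<in>Dom g. \<bar>F x\<bar> \<le> M \<and> \<bar>F x - F y\<bar> \<le> L * dist x y"
    using BL_get[OF assms(1)] by blast
  then show ?thesis using F_cont[of g F L f \<delta>] assms by auto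
qed

lemma local_sol:
  fixes d :: nat and q \<gamma> :: real
  obtains \<delta> :: real and P E Z W :: "real \<Rightarrow> real" where
    "0 < \<delta>" "\<delta> \<le> 1"
    "\<And>s. \<bar>P s\<bar> \<le> 1/2" "\<And>s. \<bar>E s - 1\<bar> \<le> 1/2" "\<And>s. \<bar>Z s + \<gamma>\<bar> \<le> 1/2" "\<And>s. \<bar>W s - 1\<bar> \<le> 1/2"
    "continuous_on UNIV E" "continuous_on UNIV Z" "continuous_on UNIV W"
    "E 0 = 1" "Z 0 = -\<gamma>" "W 0 = 1"
    "\<And>u. u \<in> {0<..<\<delta>} \<Longrightarrow> (E has_real_derivative u * Fe d (u, P u, E u, Z u, W u)) (at u)"
    "\<And>u. u \<in> {0<..<\<delta>} \<Longrightarrow> (Z has_real_derivative u * Fz d q (u, P u, E u, Z u, W u)) (at u)"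
    "\<And>u. u \<in> {0<..<\<delta>} \<Longrightarrow> (W has_real_derivative u * Fw d (u, P u, E u, Z u, W u)) (at u)"
    "\<And>u. u \<in> {0<..<\<delta>} \<Longrightarrow> ((\<lambda>v. v^2 * P v) has_real_derivative u^3 * Qf d q (u, P u, E u, Z u, W u)) (at u)"
proof -
  obtain \<delta> f where d0: "0 < \<delta>" and d1: "\<delta> \<le> 1" and f: "f \<in> Bl \<gamma>" and
    H: "\<forall>u\<in>{0..\<delta>}.
     apply_bcontfun (fst f) u = inverse (u^2) * integral {0..u} (\<lambda>s. s^3 * Qf d q (vals f s)) \<and>
     apply_bcontfun (fst (snd f)) u = 1 + integral {0..u} (\<lambda>s. s^1 * Fe d (vals f s)) \<and>
     apply_bcontfun (fst (snd (snd f))) u = -\<gamma> + integral {0..u} (\<lambda>s. s^1 * Fz d q (vals f s)) \<and>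
     apply_bcontfun (snd (snd (snd f))) u = 1 + integral {0..u} (\<lambda>s. s^1 * Fw d (vals f s))"
    using fixpoint[OF BL_Qf BL_Fe BL_Fz BL_Fw, of \<gamma> d q d d q d] by blast
  define P where "P = apply_bcontfun (fst f)"
  define E where "E = apply_bcontfun (fst (snd f))"
  define Z where "Z = apply_bcontfun (fst (snd (snd f)))"
  define W where "W = apply_bcontfun (snd (snd (snd f)))"
  have vf: "vals f s = (s, P s, E s, Z s, W s)" for s by (simp add: vals_def P_def E_def Z_def W_def)
  have cQ: "continuous_on {0..\<delta>} (\<lambda>s. s^3 * Qf d q (vals f s))"
    using Fc_get[OF BL_Qf f, of \<delta>] d0 d1 by (intro continuous_intros) auto
  have cE: "continuous_on {0..\<delta>} (\<lambda>s. s^1 * Fe d (vals f s))"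
    using Fc_get[OF BL_Fe f, of \<delta>] d0 d1 by (intro continuous_intros) auto
  have cZ: "continuous_on {0..\<delta>} (\<lambda>s. s^1 * Fz d q (vals f s))"
    using Fc_get[OF BL_Fz f, of \<delta>] d0 d1 by (intro continuous_intros) auto
  have cW: "continuous_on {0..\<delta>} (\<lambda>s. s^1 * Fw d (vals f s))"
    using Fc_get[OF BL_Fw f, of \<delta>] d0 d1 by (intro continuous_intros) auto
  show ?thesis
  proof (rule that[of \<delta> P E Z W])
    show "0 < \<delta>" "\<delta> \<le> 1" by (fact d0, fact d1)
    show "\<bar>P s\<bar> \<le> 1/2" "\<bar>E s - 1\<bar> \<le> 1/2" "\<bar>Z s + \<gamma>\<bar> \<le> 1/2" "\<bar>W s - 1\<bar> \<le> 1/2" for s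
      using f by (auto simp: Bl_def P_def E_def Z_def W_def)
    show "continuous_on UNIV E" "continuous_on UNIV Z" "continuous_on UNIV W"
      by (auto simp: E_def Z_def W_def)
    show "E 0 = 1" "Z 0 = -\<gamma>" "W 0 = 1" using H d0 by (auto simp: E_def Z_def W_def)
    fix u assume u: "u \<in> {0<..<\<delta>}"
    show "(E has_real_derivative u * Fe d (u, P u, E u, Z u, W u)) (at u)"
      using deriv_int[OF cE u, of E 1] H u by (simp add: E_def vf)
    show "(Z has_real_derivative u * Fz d q (u, P u, E u, Z u, W u)) (at u)"
      using deriv_int[OF cZ u, of Z "-\<gamma>"] H u by (simp add: Z_def vf)
    show "(W has_real_derivative u * Fw d (u, P u, E u, Z u, W u)) (at u)"
      using deriv_int[OF cW u, of W 1] H u by (simp add: W_def vf)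
    have "v^2 * P v = 0 + integral {0..v} (\<lambda>s. s^3 * Qf d q (vals f s))" if "v \<in> {0<..<\<delta>}" for v
      using H that by (simp add: P_def)
    then show "((\<lambda>v. v^2 * P v) has_real_derivative u^3 * Qf d q (u, P u, E u, Z u, W u)) (at u)"
      using deriv_int[OF cQ u, of "\<lambda>v. v^2 * P v" 0] by (simp add: vf)
  qed
qed

lemma sqrt3_le: "sqrt (a^2 + b^2 + c^2) \<le> \<bar>a\<bar> + \<bar>b\<bar> + \<bar>c\<bar>"
proof -
  define x y z where "x = \<bar>a\<bar>" "y = \<bar>b\<bar>" "z = \<bar>c\<bar>"
  have nn: "0 \<le> x" "0 \<le> y" "0 \<le> z" by (auto simp: x_y_z_def)
  have sq: "a^2 = x^2" "b^2 = y^2" "c^2 = z^2" by (auto simp: x_y_z_def)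
  have e: "(x + y + z)^2 = x^2 + y^2 + z^2 + 2 * (x*y + x*z + y*z)" by (simp add: power2_eq_square algebra_simps)
  have "0 \<le> x*y + x*z + y*z" using nn by simp
  then have "a^2 + b^2 + c^2 \<le> (x + y + z)^2" unfolding sq e by simp
  then have "sqrt (a^2 + b^2 + c^2) \<le> sqrt ((x + y + z)^2)" by (rule real_sqrt_le_mono)
  then show ?thesis using nn by (simp add: x_y_z_def)
qed

theorem corollary3p2:
  fixes d :: nat and q \<gamma> :: real
  assumes "d > 0"
  shows "\<exists>I X Y Z W.
     is_interval I \<and> {..0} \<subseteq> I \<and> solves_S d q I X Y Z W \<and>
     (\<forall>t\<in>I. Y t > 0) \<and>
     (\<exists>C. \<forall>\<^sub>F t in at_bot.
        exp (-2 * t) * sqrt ((X t - 0)^2 + (Z t - 1)^2 + (W t - 0)^2) \<le> C) \<and>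
     (\<exists>C. \<forall>\<^sub>F t in at_bot. exp (- t) * \<bar>Y t\<bar> \<le> C) \<and>
     ((\<lambda>t. W t / (Y t)^2) \<longlongrightarrow> 1) at_bot \<and>
     ((\<lambda>t. (1 - Z t) / (Y t)^2) \<longlongrightarrow> \<gamma>) at_bot"
proof -
  obtain \<delta> :: real and P E Z W :: "real \<Rightarrow> real" where
    d0: "0 < \<delta>" and d1: "\<delta> \<le> 1" and
    bP: "\<And>s. \<bar>P s\<bar> \<le> 1/2" and bE: "\<And>s. \<bar>E s - 1\<bar> \<le> 1/2" and bZ: "\<And>s. \<bar>Z s + \<gamma>\<bar> \<le> 1/2" and bW: "\<And>s. \<bar>W s - 1\<bar> \<le> 1/2" and
    cE: "continuous_on UNIV E" and cZ: "continuous_on UNIV Z" and cW: "continuous_on UNIV W" and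
    E0: "E 0 = 1" and Z0: "Z 0 = -\<gamma>" and W0: "W 0 = 1" and
    dE: "\<And>u. u \<in> {0<..<\<delta>} \<Longrightarrow> (E has_real_derivative u * Fe d (u, P u, E u, Z u, W u)) (at u)" and
    dZ: "\<And>u. u \<in> {0<..<\<delta>} \<Longrightarrow> (Z has_real_derivative u * Fz d q (u, P u, E u, Z u, W u)) (at u)" and
    dW: "\<And>u. u \<in> {0<..<\<delta>} \<Longrightarrow> (W has_real_derivative u * Fw d (u, P u, E u, Z u, W u)) (at u)" and
    dP: "\<And>u. u \<in> {0<..<\<delta>} \<Longrightarrow> ((\<lambda>v. v^2 * P v) has_real_derivative u^3 * Qf d q (u, P u, E u, Z u, W u)) (at u)"
    by (rule local_sol[of \<gamma> d q]) blast
  define \<kappa> where "\<kappa> = \<delta> / 2"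
  have k0: "0 < \<kappa>" using d0 by (simp add: \<kappa>_def)
  define uu where "uu t = \<kappa> * exp t" for t
  define Yf where "Yf t = uu t * E (uu t)" for t
  define Xf where "Xf t = (uu t)^2 * P (uu t) + cc d * (Yf t)^2" for t
  define Zf where "Zf t = 1 + (uu t)^2 * Z (uu t)" for t
  define Wf where "Wf t = (uu t)^2 * W (uu t)" for t
  have uu0: "0 < uu t" for t using k0 by (simp add: uu_def)
  have uuI: "uu t \<in> {0<..<\<delta>}" if "t \<le> 0" for t
  proof -
    have "exp t \<le> 1" using that by simp
    then have "uu t \<le> \<kappa>" using k0 unfolding uu_def by (simp add: mult_left_le)
    then show ?thesis using uu0[of t] d0 by (simp add: \<kappa>_def)
  qed
  have duu: "(uu has_real_derivative uu t) (at t)" for t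
    unfolding uu_def by (auto intro!: derivative_eq_intros)
  have Epos: "E s \<ge> 1/2" for s using bE[of s] by linarith
  have sol: "solves_S d q {..0} Xf Yf Zf Wf"
    unfolding solves_S_def
  proof (intro ballI)
    fix t :: real assume "t \<in> {..0}"
    then have tI: "uu t \<in> {0<..<\<delta>}" using uuI by auto
    define U where "U = uu t"
    note UI = tI[folded U_def]
    have cE: "((\<lambda>t. E (uu t)) has_real_derivative (U * Fe d (U, P U, E U, Z U, W U)) * U) (at t)"
      using DERIV_chain2[OF dE[OF tI] duu[of t]] by (simp add: U_def)
    have cZ: "((\<lambda>t. Z (uu t)) has_real_derivative (U * Fz d q (U, P U, E U, Z U, W U)) * U) (at t)"
      using DERIV_chain2[OF dZ[OF tI] duu[of t]] by (simp add: U_def)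
    have cW: "((\<lambda>t. W (uu t)) has_real_derivative (U * Fw d (U, P U, E U, Z U, W U)) * U) (at t)"
      using DERIV_chain2[OF dW[OF tI] duu[of t]] by (simp add: U_def)
    have cP: "((\<lambda>t. (uu t)^2 * P (uu t)) has_real_derivative (U^3 * Qf d q (U, P U, E U, Z U, W U)) * U) (at t)"
      using DERIV_chain2[OF dP[OF tI] duu[of t]] by (simp add: U_def)
    have du: "(uu has_real_derivative U) (at t)" using duu[of t] by (simp add: U_def)
    have du2: "((\<lambda>t. (uu t)^2) has_real_derivative 2 * U * U) (at t)"
      using DERIV_mult[OF du du] by (simp add: U_def power2_eq_square mult.assoc)
    have dY: "(Yf has_real_derivative U * E U + U * (U * Fe d (U, P U, E U, Z U, W U) * U)) (at t)"
      unfolding Yf_def[abs_def] using DERIV_mult[OF du cE] by (simp add: U_def algebra_simps)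
    have dY2: "((\<lambda>t. (Yf t)^2) has_real_derivative 2 * Yf t * (U * E U + U * (U * Fe d (U, P U, E U, Z U, W U) * U))) (at t)"
      using DERIV_mult[OF dY dY] by (simp add: power2_eq_square algebra_simps)
    have dX: "(Xf has_real_derivative U^3 * Qf d q (U, P U, E U, Z U, W U) * U + cc d * (2 * Yf t * (U * E U + U * (U * Fe d (U, P U, E U, Z U, W U) * U)))) (at t)"
      unfolding Xf_def[abs_def] by (intro DERIV_add DERIV_cmult cP dY2)
    have dZf: "(Zf has_real_derivative 2 * U * U * Z U + U^2 * (U * Fz d q (U, P U, E U, Z U, W U) * U)) (at t)"
    proof -
      have "((\<lambda>t. 1 + (uu t)^2 * Z (uu t)) has_real_derivative 0 + (2 * U * U * Z (uu t) + (U * Fz d q (U, P U, E U, Z U, W U) * U) * (uu t)^2)) (at t)"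
        by (intro DERIV_add DERIV_const DERIV_mult du2 cZ)
      then show ?thesis by (simp add: Zf_def[abs_def] U_def algebra_simps)
    qed
    have dWf: "(Wf has_real_derivative 2 * U * U * W U + U^2 * (U * Fw d (U, P U, E U, Z U, W U) * U)) (at t)"
    proof -
      have "((\<lambda>t. (uu t)^2 * W (uu t)) has_real_derivative (2 * U * U * W (uu t) + (U * Fw d (U, P U, E U, Z U, W U) * U) * (uu t)^2)) (at t)"
        by (intro DERIV_mult du2 cW)
      then show ?thesis by (simp add: Wf_def[abs_def] U_def algebra_simps)
    qed
    have XU: "Xf t = U^2 * P U + cc d * (U * E U)^2" by (simp add: Xf_def Yf_def U_def)
    have YU: "Yf t = U * E U" by (simp add: Yf_def U_def)
    have ZU: "Zf t = 1 + U^2 * Z U" by (simp add: Zf_def U_def)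
    have WU: "Wf t = U^2 * W U" by (simp add: Wf_def U_def)
    show "(Xf has_real_derivative
          (Xf t * (real d * (Xf t)^2 + (Zf t)^2 - 1) + A2 d / real d * (Yf t)^2
           - 2 * A3 d q / real d * (Wf t)^2)) (at t within {..0}) \<and>
       (Yf has_real_derivative
          (Yf t * (real d * (Xf t)^2 + (Zf t)^2 - Xf t))) (at t within {..0}) \<and>
       (Zf has_real_derivative
          (Zf t * (real d * (Xf t)^2 + (Zf t)^2 - 1) + A3 d q * (Wf t)^2)) (at t within {..0}) \<and>
       (Wf has_real_derivative
          (Wf t * (real d * (Xf t)^2 + (Zf t)^2 - 2 * Xf t + Zf t))) (at t within {..0})"
    proof (intro conjI)
      show "(Xf has_real_derivative
          (Xf t * (real d * (Xf t)^2 + (Zf t)^2 - 1) + A2 d / real d * (Yf t)^2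
           - 2 * A3 d q / real d * (Wf t)^2)) (at t within {..0})"
        using dX idX[OF assms, of U q "P U" "E U" "Z U" "W U"] unfolding XU YU ZU WU
        by (auto intro: has_field_derivative_at_within)
      show "(Yf has_real_derivative
          (Yf t * (real d * (Xf t)^2 + (Zf t)^2 - Xf t))) (at t within {..0})"
        using dY idY[where d=d and U=U and p="P U" and e="E U" and z="Z U" and w="W U"] unfolding XU YU ZU WU
        by (auto intro: has_field_derivative_at_within)
      show "(Zf has_real_derivative
          (Zf t * (real d * (Xf t)^2 + (Zf t)^2 - 1) + A3 d q * (Wf t)^2)) (at t within {..0})"
        using dZf idZ[where d=d and q=q and U=U and p="P U" and e="E U" and z="Z U" and w="W U"] unfolding XU YU ZU WU
        by (auto intro: has_field_derivative_at_within)
      show "(Wf has_real_derivative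
          (Wf t * (real d * (Xf t)^2 + (Zf t)^2 - 2 * Xf t + Zf t))) (at t within {..0})"
        using dWf idW[where d=d and U=U and p="P U" and e="E U" and z="Z U" and w="W U"] unfolding XU YU ZU WU
        by (auto intro: has_field_derivative_at_within)
    qed
  qed
  have Ypos: "\<forall>t\<in>{..0}. Yf t > 0"
  proof
    fix t :: real
    have "0 < E (uu t)" using Epos[of "uu t"] by linarith
    then show "Yf t > 0" using uu0[of t] by (simp add: Yf_def)
  qed
  have cc0: "0 < cc d" by (simp add: cc_def)
  have kk: "exp (-2 * t) * (uu t)^2 = \<kappa>^2" for t
  proof -
    have "exp (-2 * t) * (uu t)^2 = \<kappa>^2 * (exp (-2 * t) * exp t * exp t)"
      by (simp add: uu_def power2_eq_square algebra_simps)
    also have "exp (-2 * t) * exp t * exp t = 1" by (simp add: exp_add[symmetric])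
    finally show ?thesis by simp
  qed
  define C1 where "C1 = \<kappa>^2 * (1/2 + cc d * (9/4) + (\<bar>\<gamma>\<bar> + 1/2) + 3/2)"
  have B1: "exp (-2 * t) * sqrt ((Xf t - 0)^2 + (Zf t - 1)^2 + (Wf t - 0)^2) \<le> C1" for t
  proof -
    define U where "U = uu t"
    have E2: "(E U)^2 \<le> 9/4"
    proof -
      have "\<bar>E U\<bar> \<le> 3/2" using bE[of U] by linarith
      then have "\<bar>E U\<bar>^2 \<le> (3/2)^2" by (intro power_mono) auto
      then show ?thesis by (simp add: power2_eq_square)
    qed
    have xi: "\<bar>P U + cc d * (E U)^2\<bar> \<le> 1/2 + cc d * (9/4)"
    proof -
      have "\<bar>P U + cc d * (E U)^2\<bar> \<le> \<bar>P U\<bar> + cc d * (E U)^2" using cc0 by (simp add: abs_triangle_ineq[THEN order_trans])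
      also have "\<dots> \<le> 1/2 + cc d * (9/4)" using bP[of U] E2 cc0 by (intro add_mono mult_left_mono) auto
      finally show ?thesis .
    qed
    have zb: "\<bar>Z U\<bar> \<le> \<bar>\<gamma>\<bar> + 1/2" using bZ[of U] by linarith
    have wb: "\<bar>W U\<bar> \<le> 3/2" using bW[of U] by linarith
    have XU: "Xf t = U^2 * (P U + cc d * (E U)^2)" by (simp add: Xf_def Yf_def U_def power_mult_distrib algebra_simps)
    have ZU: "Zf t - 1 = U^2 * Z U" by (simp add: Zf_def U_def)
    have WU: "Wf t = U^2 * W U" by (simp add: Wf_def U_def)
    have "sqrt ((Xf t - 0)^2 + (Zf t - 1)^2 + (Wf t - 0)^2) \<le> \<bar>Xf t\<bar> + \<bar>Zf t - 1\<bar> + \<bar>Wf t\<bar>"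
      using sqrt3_le[of "Xf t" "Zf t - 1" "Wf t"] by simp
    also have "\<dots> = U^2 * (\<bar>P U + cc d * (E U)^2\<bar> + \<bar>Z U\<bar> + \<bar>W U\<bar>)"
      unfolding XU ZU WU abs_mult by (simp add: algebra_simps)
    finally have "exp (-2 * t) * sqrt ((Xf t - 0)^2 + (Zf t - 1)^2 + (Wf t - 0)^2)
       \<le> exp (-2 * t) * (U^2 * (\<bar>P U + cc d * (E U)^2\<bar> + \<bar>Z U\<bar> + \<bar>W U\<bar>))"
      by (intro mult_left_mono) auto
    also have "\<dots> = \<kappa>^2 * (\<bar>P U + cc d * (E U)^2\<bar> + \<bar>Z U\<bar> + \<bar>W U\<bar>)"
      using kk[of t] by (simp add: U_def mult.assoc[symmetric])
    also have "\<dots> \<le> C1" unfolding C1_def using xi zb wb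
      by (intro mult_left_mono) auto
    finally show ?thesis .
  qed
  have B2: "exp (- t) * \<bar>Yf t\<bar> \<le> \<kappa> * (3/2)" for t
  proof -
    have "exp (- t) * \<bar>Yf t\<bar> = \<kappa> * \<bar>E (uu t)\<bar> * (exp (-t) * exp t)"
      using k0 by (simp add: Yf_def uu_def abs_mult algebra_simps)
    also have "exp (-t) * exp t = 1" by (simp add: exp_minus)
    finally have "exp (- t) * \<bar>Yf t\<bar> = \<kappa> * \<bar>E (uu t)\<bar>" by simp
    also have "\<dots> \<le> \<kappa> * (3/2)"
    proof -
      have "\<bar>E (uu t)\<bar> \<le> 3/2" using bE[of "uu t"] by linarith
      then show ?thesis using k0 by (intro mult_left_mono) auto
    qed
    finally show ?thesis .
  qed
  have ul: "(uu \<longlongrightarrow> 0) at_bot"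
  proof -
    have "((\<lambda>t. \<kappa> * exp t) \<longlongrightarrow> \<kappa> * 0) at_bot" by (intro tendsto_mult tendsto_const exp_at_bot)
    then show ?thesis by (simp add: uu_def[abs_def])
  qed
  have El: "((\<lambda>t. E (uu t)) \<longlongrightarrow> 1) at_bot"
    using isCont_tendsto_compose[OF _ ul, of E] cE E0 by (simp add: continuous_on_eq_continuous_at)
  have Zl: "((\<lambda>t. Z (uu t)) \<longlongrightarrow> -\<gamma>) at_bot"
    using isCont_tendsto_compose[OF _ ul, of Z] cZ Z0 by (simp add: continuous_on_eq_continuous_at)
  have Wl: "((\<lambda>t. W (uu t)) \<longlongrightarrow> 1) at_bot"
    using isCont_tendsto_compose[OF _ ul, of W] cW W0 by (simp add: continuous_on_eq_continuous_at)
  have eq1: "(\<lambda>t. Wf t / (Yf t)^2) = (\<lambda>t. W (uu t) / (E (uu t))^2)"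
  proof
    fix t have "uu t \<noteq> 0" using uu0[of t] by simp
    then show "Wf t / (Yf t)^2 = W (uu t) / (E (uu t))^2" by (simp add: Wf_def Yf_def power_mult_distrib)
  qed
  have eq2: "(\<lambda>t. (1 - Zf t) / (Yf t)^2) = (\<lambda>t. - Z (uu t) / (E (uu t))^2)"
  proof
    fix t have "uu t \<noteq> 0" using uu0[of t] by simp
    then show "(1 - Zf t) / (Yf t)^2 = - Z (uu t) / (E (uu t))^2" by (simp add: Zf_def Yf_def power_mult_distrib)
  qed
  have L1: "((\<lambda>t. Wf t / (Yf t)^2) \<longlongrightarrow> 1) at_bot"
  proof -
    have "((\<lambda>t. W (uu t) / (E (uu t))^2) \<longlongrightarrow> 1 / 1^2) at_bot"
      by (intro tendsto_divide tendsto_power Wl El) auto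
    then show ?thesis unfolding eq1 by simp
  qed
  have L2: "((\<lambda>t. (1 - Zf t) / (Yf t)^2) \<longlongrightarrow> \<gamma>) at_bot"
  proof -
    have "((\<lambda>t. - Z (uu t) / (E (uu t))^2) \<longlongrightarrow> - (-\<gamma>) / 1^2) at_bot"
      by (intro tendsto_divide tendsto_power tendsto_minus Zl El) auto
    then show ?thesis unfolding eq2 by simp
  qed
  have C1': "\<exists>C. \<forall>\<^sub>F t in at_bot. exp (-2 * t) * sqrt ((Xf t - 0)^2 + (Zf t - 1)^2 + (Wf t - 0)^2) \<le> C"
    using B1 by (intro exI[of _ C1] always_eventually) auto
  have C2': "\<exists>C. \<forall>\<^sub>F t in at_bot. exp (- t) * \<bar>Yf t\<bar> \<le> C"
    using B2 by (intro exI[of _ "\<kappa> * (3/2)"] always_eventually) auto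
  show ?thesis
    apply (rule exI[of _ "{..0::real}"], rule exI[of _ Xf], rule exI[of _ Yf], rule exI[of _ Zf], rule exI[of _ Wf])
    using sol Ypos C1' C2' L1 L2 by simp
qed

end
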